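(* Let $d$ be an even positive integer and $s$ a positive integer with $2s\leqslant d$. Let $\varepsilon,\gamma\in I^s\setminus\{\alpha,\omega\}$, $i=t(\varepsilon)$, $j=t(\gamma)$, and suppose $\varepsilon_s=0$. If either (1) $\varepsilon_s=\gamma_s=0$, or (2) $\gamma_s=1$ and $j\geqslant i$, then for every $x\in B_\varepsilon$ and $y\in B_\gamma$ we have $\langle\varepsilon,\gamma\rangle\leqslant\langle x,y\rangle$.
   Context: Let $I=\{0,1\}$; for binary vectors $x,y$ of the same length, $|x|=\sum_i x_i$ and $\langle x,y\rangle=\sum_i x_iy_i$. Let $\alpha=(0,\ldots,0)$, $\omega=(1,\ldots,1)\in I^s$. For $\varepsilon\in I^s\setminus\{\alpha,\omega\}$ let $t(\varepsilon)$ be the unique index $i$ with $\varepsilon_i\neq\varepsilon_{i+1}=\cdots=\varepsilon_s$, and $A_\varepsilon=\{\varepsilon_1\}\times\cdots\times\{\varepsilon_i\}\times I^{s-1-i}\subseteq I^{s-1}$ with $i=t(\varepsilon)$. Define subsets of $I^{d-s}$: $X_0=\{x\colon |x|\leqslant \frac d2-s\}$; $X_k=\{x\colon |x|=\frac d2-s+k\}$ for $0<k<s$; $X_s=\{x\colon |x|\geqslant \frac d2\}$. Writing $x\in I^{d-s}$ as $x=(x',x'')\in I^{d-2s+1}\times I^{s-1}$, for $\varepsilon\in I^s\setminus\{\alpha,\omega\}$ set $B_\varepsilon=X_{|\varepsilon|}\cap(I^{d-2s+1}\times A_\varepsilon)$. *)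

theory Defs
  imports Main
begin

text \<open>Binary vectors in I^n are represented as nat lists of length n with entries in {0,1}.
  Coordinates are 1-based as in the paper: bit v i = v_i.\<close>

definition cube :: "nat \<Rightarrow> nat list set" where
  "cube n = {v. length v = n \<and> set v \<subseteq> {0, 1}}"

definition bit :: "nat list \<Rightarrow> nat \<Rightarrow> nat" where
  "bit v i = v ! (i - 1)"

definition weight :: "nat list \<Rightarrow> nat" where
  "weight v = sum_list v"

definition ip :: "nat list \<Rightarrow> nat list \<Rightarrow> nat" where
  "ip v w = (\<Sum>i = 1..length v. bit v i * bit w i)"

definition alpha :: "nat \<Rightarrow> nat list" where
  "alpha s = replicate s 0"

definition omega :: "nat \<Rightarrow> nat list" where
  "omega s = replicate s 1"

definition tidx :: "nat list \<Rightarrow> nat" where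
  "tidx eps = (THE i. 1 \<le> i \<and> i < length eps \<and> bit eps i \<noteq> bit eps (i + 1) \<and>
      (\<forall>k. i + 1 \<le> k \<and> k \<le> length eps \<longrightarrow> bit eps k = bit eps (i + 1)))"

definition Aset :: "nat list \<Rightarrow> nat list set" where
  "Aset eps = {z \<in> cube (length eps - 1). \<forall>k. 1 \<le> k \<and> k \<le> tidx eps \<longrightarrow> bit z k = bit eps k}"

definition Xset :: "nat \<Rightarrow> nat \<Rightarrow> nat \<Rightarrow> nat list set" where
  "Xset d s k =
     (if k = 0 then {x \<in> cube (d - s). weight x \<le> d div 2 - s}
      else if k < s then {x \<in> cube (d - s). weight x = d div 2 - s + k}
      else {x \<in> cube (d - s). weight x \<ge> d div 2})"

text \<open>B_eps = X_|eps| \<inter> (I^(d-2s+1) x A_eps), writing x = (x', x'').\<close>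
definition Bset :: "nat \<Rightarrow> nat list \<Rightarrow> nat list set" where
  "Bset d eps = {x \<in> Xset d (length eps) (weight eps).
      take (d - 2 * length eps + 1) x \<in> cube (d - 2 * length eps + 1) \<and>
      drop (d - 2 * length eps + 1) x \<in> Aset eps}"

end

theory Submission
  imports Defs
begin

lemma tidx_prop:
  assumes v: "v \<in> cube s - {alpha s, omega s}"
  shows "1 \<le> tidx v \<and> tidx v < s \<and> bit v (tidx v) \<noteq> bit v s \<and>
     (\<forall>k. tidx v < k \<and> k \<le> s \<longrightarrow> bit v k = bit v s)"
proof -
  have len: "length v = s" and set: "set v \<subseteq> {0,1}" using v by (auto simp: cube_def)
  define P where "P = (\<lambda>i. 1 \<le> i \<and> i < length v \<and> bit v i \<noteq> bit v (i + 1) \<and>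
      (\<forall>k. i + 1 \<le> k \<and> k \<le> length v \<longrightarrow> bit v k = bit v (i + 1)))"
  have "\<exists>k\<in>{1..s}. bit v k \<noteq> bit v s"
  proof (rule ccontr)
    assume "\<not> ?thesis"
    hence c: "\<forall>k\<in>{1..s}. bit v k = bit v s" by blast
    have s0: "s > 0" using v len by (auto simp: alpha_def)
    have "v = replicate s (bit v s)"
    proof (rule nth_equalityI)
      show "length v = length (replicate s (bit v s))" using len by simp
      fix k assume "k < length v"
      then have "k+1 \<in> {1..s}" using len by simp
      then have "bit v (k+1) = bit v s" using c by blast
      then show "v ! k = replicate s (bit v s) ! k" using \<open>k < length v\<close> len
        by (simp add: bit_def)
    qed
    moreover have "v ! (s-1) \<in> set v" using s0 len by simp
    then have "bit v s \<in> {0,1}" using set unfolding bit_def by blast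
    ultimately show False using v unfolding alpha_def omega_def
      by (metis DiffD2 insertCI insertE singletonD)
  qed
  define i where "i = Max {k\<in>{1..s}. bit v k \<noteq> bit v s}"
  have fin: "finite {k\<in>{1..s}. bit v k \<noteq> bit v s}" by simp
  have iin: "i \<in> {k\<in>{1..s}. bit v k \<noteq> bit v s}"
    unfolding i_def using Max_in[OF fin] \<open>\<exists>k\<in>{1..s}. bit v k \<noteq> bit v s\<close> by blast
  have above: "\<forall>k. i < k \<and> k \<le> s \<longrightarrow> bit v k = bit v s"
  proof (intro allI impI)
    fix k assume "i < k \<and> k \<le> s"
    then show "bit v k = bit v s" using Max_ge[OF fin, of k] i_def by fastforce
  qed
  have is_lt: "i < s" using iin by (cases "i = s") auto
  have ai: "bit v (i+1) = bit v s" using above[rule_format, of "i+1"] is_lt by simp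
  have Pi: "P i" unfolding P_def
  proof (intro conjI allI impI)
    show "1 \<le> i" "i < length v" using iin is_lt len by auto
    show "bit v i \<noteq> bit v (i + 1)" using iin ai by simp
    fix k assume "i + 1 \<le> k \<and> k \<le> length v"
    then have "bit v k = bit v s" using above[rule_format, of k] len by simp
    then show "bit v k = bit v (i + 1)" using ai by simp
  qed
  have uniq: "j = i" if "P j" for j
  proof -
    have "False" if a: "P j" "P i" "j < i" for i j
    proof -
      have h: "\<forall>k. j + 1 \<le> k \<and> k \<le> length v \<longrightarrow> bit v k = bit v (j + 1)"
        and il: "i < length v" and ne: "bit v i \<noteq> bit v (i + 1)"
        using a unfolding P_def by blast+
      have "bit v i = bit v (j + 1)" using h[rule_format, of i] a(3) il by simp
      moreover have "bit v (i + 1) = bit v (j + 1)" using h[rule_format, of "i+1"] a(3) il by simp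
      ultimately show False using ne by simp
    qed
    then show ?thesis using \<open>P j\<close> Pi by (meson linorder_neqE_nat)
  qed
  have "tidx v = (THE i. P i)" unfolding tidx_def P_def by (rule refl)
  also have "\<dots> = i" by (rule the_equality[where P=P, OF Pi uniq])
  finally have ti: "tidx v = i" .
  have "1 \<le> i" "bit v i \<noteq> bit v s" using iin by auto
  then show ?thesis unfolding ti using is_lt above by blast
qed

lemma len_B:
  assumes "x \<in> Bset d eps"
  shows "length x = d - length eps"
  using assms by (auto simp: Bset_def Xset_def cube_def split: if_splits)

lemma bit_B:
  assumes "x \<in> Bset d eps" "1 \<le> k" "k \<le> tidx eps" "length eps > 0" "2 * length eps \<le> d"
  shows "bit x (d - 2 * length eps + 1 + k) = bit eps k"
proof -
  let ?m = "d - 2 * length eps + 1"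
  have "drop ?m x \<in> Aset eps" using assms by (auto simp: Bset_def)
  then have "bit (drop ?m x) k = bit eps k" using assms by (auto simp: Aset_def)
  moreover have "?m \<le> length x" using assms(4,5) len_B[OF assms(1)] by linarith
  ultimately show ?thesis using assms(2) by (simp add: bit_def)
qed

theorem lemma2:
  fixes d s :: nat and eps gam :: "nat list"
  assumes "even d" and "d > 0" and "s > 0" and "2 * s \<le> d"
    and "eps \<in> cube s - {alpha s, omega s}"
    and "gam \<in> cube s - {alpha s, omega s}"
    and "bit eps s = 0"
    and "(bit eps s = 0 \<and> bit gam s = 0) \<or> (bit gam s = 1 \<and> tidx gam \<ge> tidx eps)"
  shows "\<forall>x \<in> Bset d eps. \<forall>y \<in> Bset d gam. ip eps gam \<le> ip x y"
proof (intro ballI)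
  fix x y assume x: "x \<in> Bset d eps" and y: "y \<in> Bset d gam"
  have le: "length eps = s" "length gam = s" using assms(5,6) by (auto simp: cube_def)
  have te: "1 \<le> tidx eps \<and> tidx eps < s \<and> bit eps (tidx eps) \<noteq> bit eps s \<and>
     (\<forall>k. tidx eps < k \<and> k \<le> s \<longrightarrow> bit eps k = bit eps s)" by (rule tidx_prop[OF assms(5)])
  have tg: "1 \<le> tidx gam \<and> tidx gam < s \<and> bit gam (tidx gam) \<noteq> bit gam s \<and>
     (\<forall>k. tidx gam < k \<and> k \<le> s \<longrightarrow> bit gam k = bit gam s)" by (rule tidx_prop[OF assms(6)])
  define r where "r = min (tidx eps) (tidx gam)"
  define m where "m = d - 2 * s + 1"
  define f where "f = (\<lambda>k. bit x k * bit y k)"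
  have zero: "bit eps k * bit gam k = 0" if "r < k" "k \<le> s" for k
  proof (cases "tidx eps < k")
    case True then show ?thesis using te[THEN conjunct2, THEN conjunct2, THEN conjunct2, rule_format, of k] that assms(7) by simp
  next
    case False
    then have "tidx gam < k" "bit gam s = 0" using that assms(8) r_def by auto
    then show ?thesis using tg[THEN conjunct2, THEN conjunct2, THEN conjunct2, rule_format, of k] that by simp
  qed
  have "ip eps gam = (\<Sum>k = 1..r. bit eps k * bit gam k)"
    unfolding ip_def le(1)
  proof (rule sum.mono_neutral_right)
    show "finite {1..s}" by simp
    have "r \<le> s" using te[THEN conjunct2, THEN conjunct1] r_def by simp
    then show "{1..r} \<subseteq> {1..s}" by auto
    show "\<forall>k\<in>{1..s} - {1..r}. bit eps k * bit gam k = 0"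
    proof
      fix k assume "k \<in> {1..s} - {1..r}"
      then have "r < k" "k \<le> s" by auto
      then show "bit eps k * bit gam k = 0" by (rule zero)
    qed
  qed
  also have "\<dots> = (\<Sum>k = 1..r. f (m + k))"
  proof (rule sum.cong[OF refl])
    fix k assume k: "k \<in> {1..r}"
    show "bit eps k * bit gam k = f (m + k)"
      unfolding f_def m_def
      using bit_B[OF x, of k] bit_B[OF y, of k] k le assms(3,4) r_def by auto
  qed
  also have "\<dots> = (\<Sum>k \<in> (\<lambda>k. m + k) ` {1..r}. f k)"
    by (subst sum.reindex) (auto simp: inj_on_def)
  also have "\<dots> \<le> (\<Sum>k = 1..length x. f k)"
  proof (rule sum_mono2)
    have "length x = d - s" using len_B[OF x] le by simp
    then show "(\<lambda>k. m + k) ` {1..r} \<subseteq> {1..length x}"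
      using te[THEN conjunct2, THEN conjunct1] r_def m_def assms(3,4) by auto
  qed auto
  also have "\<dots> = ip x y" unfolding ip_def f_def ..
  finally show "ip eps gam \<le> ip x y" .
qed

end
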